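(* Fix $\gamma\in\mathbb{R}$ and let $\theta^1,\theta^2\in[0,\infty)^{s_0}$ be such that $\Gamma_{\theta^1}^+\cap\Gamma_{\theta^2}^-=\emptyset$ or $\Gamma_{\theta^1}^-\cap\Gamma_{\theta^2}^+=\emptyset$, and let $c_1,c_2>0$. (i) If Condition 3.2 holds at $\gamma$ for $\theta^1$ and for $\theta^2$, then it holds at $\gamma$ for $c_1\theta^1+c_2\theta^2$. (ii) If the balance equation (B) holds for $\theta^1$ and for $\theta^2$, then (B) holds for $c_1\theta^1+c_2\theta^2$.
   Context: Fix integers $s_0,r_0\ge 1$ and, for $k=1,\dots,r_0$, vectors $\nu_k,\nu_k'\in\mathbb{N}^{s_0}$ (reactant and product vectors of reaction $k$); set $\zeta_k=\nu_k'-\nu_k$. Fix $\alpha\in[0,\infty)^{s_0}$ and $\beta\in\mathbb{R}^{r_0}$ and set $\rho_k=\beta_k+\nu_k\cdot\alpha$. For $\theta\in[0,\infty)^{s_0}$ let $\Gamma_\theta^+=\{k:\theta\cdot\zeta_k>0\}$, $\Gamma_\theta^-=\{k:\theta\cdot\zeta_k<0\}$ and $\mathrm{supp}(\theta)=\{i:\theta_i>0\}$. A maximum over the empty set is $-\infty$. For $\theta\in[0,\infty)^{s_0}$ and $\gamma\in\mathbb{R}$: the balance equation for $\theta$ is (B) $\max_{k\in\Gamma_\theta^-}\rho_k=\max_{k\in\Gamma_\theta^+}\rho_k$; the time-scale constraint for $\theta$ at $\gamma$ is (T) $\gamma\le\max_{i:\theta_i>0}\alpha_i-\max_{k\in\Gamma_\theta^+\cup\Gamma_\theta^-}\rho_k$;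 Condition 3.2 holds for $\theta$ at $\gamma$ if (B) or (T) holds. *)

theory Defs
  imports "HOL-Analysis.Analysis" "HOL-Library.Extended_Real"
begin

text \<open>Species are indexed by 0..<s0, reactions by 0..<r0.
  nu k i, nu' k i: reactant/product stoichiometry of species i in reaction k.
  Vectors in [0,inf)^s0 are functions nat => real restricted to {0..<s0}.
  Maxima are taken in the extended reals, so that the max over the empty set is -inf.\<close>

definition zeta :: "(nat \<Rightarrow> nat \<Rightarrow> nat) \<Rightarrow> (nat \<Rightarrow> nat \<Rightarrow> nat) \<Rightarrow> nat \<Rightarrow> nat \<Rightarrow> real" where
  "zeta nu nu' k i = real (nu' k i) - real (nu k i)"

definition dotp :: "nat \<Rightarrow> (nat \<Rightarrow> real) \<Rightarrow> (nat \<Rightarrow> real) \<Rightarrow> real" where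
  "dotp s0 x y = (\<Sum>i<s0. x i * y i)"

definition rho :: "nat \<Rightarrow> (nat \<Rightarrow> nat \<Rightarrow> nat) \<Rightarrow> (nat \<Rightarrow> real) \<Rightarrow> (nat \<Rightarrow> real) \<Rightarrow> nat \<Rightarrow> real" where
  "rho s0 nu alpha beta k = beta k + dotp s0 (\<lambda>i. real (nu k i)) alpha"

definition GammaP :: "nat \<Rightarrow> nat \<Rightarrow> (nat \<Rightarrow> nat \<Rightarrow> nat) \<Rightarrow> (nat \<Rightarrow> nat \<Rightarrow> nat) \<Rightarrow> (nat \<Rightarrow> real) \<Rightarrow> nat set" where
  "GammaP s0 r0 nu nu' \<theta> = {k. k < r0 \<and> dotp s0 \<theta> (zeta nu nu' k) > 0}"

definition GammaM :: "nat \<Rightarrow> nat \<Rightarrow> (nat \<Rightarrow> nat \<Rightarrow> nat) \<Rightarrow> (nat \<Rightarrow> nat \<Rightarrow> nat) \<Rightarrow> (nat \<Rightarrow> real) \<Rightarrow> nat set" where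
  "GammaM s0 r0 nu nu' \<theta> = {k. k < r0 \<and> dotp s0 \<theta> (zeta nu nu' k) < 0}"

definition supp :: "nat \<Rightarrow> (nat \<Rightarrow> real) \<Rightarrow> nat set" where
  "supp s0 \<theta> = {i. i < s0 \<and> \<theta> i > 0}"

definition emax :: "'a set \<Rightarrow> ('a \<Rightarrow> real) \<Rightarrow> ereal" where
  "emax S f = Sup ((\<lambda>x. ereal (f x)) ` S)"

definition balance :: "nat \<Rightarrow> nat \<Rightarrow> (nat \<Rightarrow> nat \<Rightarrow> nat) \<Rightarrow> (nat \<Rightarrow> nat \<Rightarrow> nat) \<Rightarrow>
    (nat \<Rightarrow> real) \<Rightarrow> (nat \<Rightarrow> real) \<Rightarrow> (nat \<Rightarrow> real) \<Rightarrow> bool" where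
  "balance s0 r0 nu nu' alpha beta \<theta> \<longleftrightarrow>
     emax (GammaM s0 r0 nu nu' \<theta>) (rho s0 nu alpha beta)
   = emax (GammaP s0 r0 nu nu' \<theta>) (rho s0 nu alpha beta)"

definition timescale :: "nat \<Rightarrow> nat \<Rightarrow> (nat \<Rightarrow> nat \<Rightarrow> nat) \<Rightarrow> (nat \<Rightarrow> nat \<Rightarrow> nat) \<Rightarrow>
    (nat \<Rightarrow> real) \<Rightarrow> (nat \<Rightarrow> real) \<Rightarrow> (nat \<Rightarrow> real) \<Rightarrow> real \<Rightarrow> bool" where
  "timescale s0 r0 nu nu' alpha beta \<theta> \<gamma> \<longleftrightarrow>
     ereal \<gamma> \<le> emax (supp s0 \<theta>) alpha
       - emax (GammaP s0 r0 nu nu' \<theta> \<union> GammaM s0 r0 nu nu' \<theta>) (rho s0 nu alpha beta)"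

definition cond32 :: "nat \<Rightarrow> nat \<Rightarrow> (nat \<Rightarrow> nat \<Rightarrow> nat) \<Rightarrow> (nat \<Rightarrow> nat \<Rightarrow> nat) \<Rightarrow>
    (nat \<Rightarrow> real) \<Rightarrow> (nat \<Rightarrow> real) \<Rightarrow> (nat \<Rightarrow> real) \<Rightarrow> real \<Rightarrow> bool" where
  "cond32 s0 r0 nu nu' alpha beta \<theta> \<gamma> \<longleftrightarrow>
     balance s0 r0 nu nu' alpha beta \<theta> \<or> timescale s0 r0 nu nu' alpha beta \<theta> \<gamma>"

end

theory Submission
  imports Defs
begin

lemma emax_upper: "k \<in> S \<Longrightarrow> ereal (f k) \<le> emax S f"
  unfolding emax_def by (rule SUP_upper)

lemma emax_mono: "S \<subseteq> T \<Longrightarrow> emax S f \<le> emax T f"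
  unfolding emax_def by (rule SUP_subset_mono) auto

lemma emax_Un: "emax (S \<union> T) f = max (emax S f) (emax T f)"
  unfolding emax_def by (simp add: SUP_union sup_max)

lemma emax_le: "(\<And>k. k \<in> S \<Longrightarrow> ereal (f k) \<le> x) \<Longrightarrow> emax S f \<le> x"
  unfolding emax_def by (rule SUP_least)

lemma emax_empty: "emax {} f = -\<infinity>"
  unfolding emax_def by (simp add: bot_ereal_def)

lemma emax_attain:
  assumes "finite S" "S \<noteq> {}"
  shows "\<exists>k\<in>S. emax S f = ereal (f k)"
proof -
  have "emax S f = Max ((\<lambda>x. ereal (f x)) ` S)"
    unfolding emax_def using assms by (simp add: cSup_eq_Max)
  moreover have "Max ((\<lambda>x. ereal (f x)) ` S) \<in> (\<lambda>x. ereal (f x)) ` S"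
    using assms by (intro Max_in) auto
  ultimately show ?thesis by auto
qed

lemma bal_abstract:
  fixes f :: "nat \<Rightarrow> real"
  assumes fin: "finite P1" "finite P2" "finite M1" "finite M2"
    and "P1 \<subseteq> P" "M2 \<subseteq> M" "P \<subseteq> P1 \<union> P2" "M \<subseteq> M1 \<union> M2"
    and h1: "\<And>k. k \<in> P2 \<Longrightarrow> k \<notin> P \<Longrightarrow> k \<in> M1"
    and h2: "\<And>k. k \<in> M1 \<Longrightarrow> k \<notin> M \<Longrightarrow> k \<in> P2"
    and b1: "emax M1 f = emax P1 f" and b2: "emax M2 f = emax P2 f"
  shows "emax M f = emax P f"
proof -
  have uP: "emax P f \<le> max (emax P1 f) (emax P2 f)"
    using emax_mono[OF assms(7), of f] by (simp add: emax_Un)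
  have uM: "emax M f \<le> max (emax M1 f) (emax M2 f)"
    using emax_mono[OF assms(8), of f] by (simp add: emax_Un)
  have lP: "emax P2 f \<le> emax P f"
  proof (cases "P2 = {}")
    case True then show ?thesis by (simp add: emax_empty)
  next
    case False
    then obtain k where k: "k \<in> P2" "emax P2 f = ereal (f k)" using emax_attain fin by blast
    show ?thesis
    proof (cases "k \<in> P")
      case True then show ?thesis using k emax_upper by metis
    next
      case False
      then have "k \<in> M1" using h1 k by blast
      then have "emax P2 f \<le> emax P1 f" using k b1 emax_upper by metis
      then show ?thesis using emax_mono[OF assms(5), of f] by simp
    qed
  qed
  have lM: "emax M1 f \<le> emax M f"
  proof (cases "M1 = {}")
    case True then show ?thesis by (simp add: emax_empty)
  next
    case False
    then obtain k where k: "k \<in> M1" "emax M1 f = ereal (f k)" using emax_attain fin by blast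
    show ?thesis
    proof (cases "k \<in> M")
      case True then show ?thesis using k emax_upper by metis
    next
      case False
      then have "k \<in> P2" using h2 k by blast
      then have "emax M1 f \<le> emax M2 f" using k b2 emax_upper by metis
      then show ?thesis using emax_mono[OF assms(6), of f] by simp
    qed
  qed
  show ?thesis using uP uM lP lM emax_mono[OF assms(5), of f] emax_mono[OF assms(6), of f] b1 b2
    by (metis antisym max.bounded_iff max.commute)
qed

lemma ts_abstract:
  fixes f :: "nat \<Rightarrow> real"
  assumes fin: "finite P" "finite M" "finite P2" "finite M2"
    and cov: "\<And>k. k \<in> P \<union> M \<Longrightarrow> k \<in> P1 \<union> M1 \<union> P2 \<union> M2"
    and hp: "\<And>k. k \<in> P2 \<Longrightarrow> k \<notin> P1 \<union> M1 \<Longrightarrow> k \<in> P"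
    and hm: "\<And>k. k \<in> M2 \<Longrightarrow> k \<notin> P1 \<union> M1 \<Longrightarrow> k \<in> M"
    and b2: "emax M2 f = emax P2 f"
  shows "emax (P \<union> M) f \<le> emax (P1 \<union> M1) f \<or> emax M f = emax P f"
proof -
  { assume nle: "\<not> emax (P \<union> M) f \<le> emax (P1 \<union> M1) f"
  then have "P \<union> M \<noteq> {}" by (auto simp: emax_empty)
  then obtain k0 where k0: "k0 \<in> P \<union> M" "emax (P \<union> M) f = ereal (f k0)"
    using emax_attain[of "P \<union> M" f] fin by blast
  have "k0 \<notin> P1 \<union> M1" using nle k0 emax_upper by metis
  then have "k0 \<in> P2 \<union> M2" using cov k0 by blast
  then have R2: "ereal (f k0) \<le> emax P2 f"
    using emax_upper[of k0 "P2 \<union> M2" f] b2 by (simp add: emax_Un)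
  have "P2 \<noteq> {}" using R2 by (auto simp: emax_empty)
  then obtain kp where kp: "kp \<in> P2" "emax P2 f = ereal (f kp)"
    using emax_attain[of P2 f] fin by blast
  have "kp \<notin> P1 \<union> M1"
  proof
    assume "kp \<in> P1 \<union> M1"
    then have "ereal (f kp) \<le> emax (P1 \<union> M1) f" by (rule emax_upper)
    moreover have "ereal (f k0) \<le> ereal (f kp)" using R2 kp by simp
    ultimately show False using nle k0 by (metis order_trans)
  qed
  then have "kp \<in> P" using hp kp by blast
  then have lp: "emax P2 f \<le> emax P f" using kp emax_upper by metis
  have "M2 \<noteq> {}" using R2 b2 by (metis emax_empty ereal_less_eq(7) ereal_infty_less_eq(2) MInfty_neq_ereal(1))
  then obtain km where km: "km \<in> M2" "emax M2 f = ereal (f km)"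
    using emax_attain[of M2 f] fin by blast
  have "km \<notin> P1 \<union> M1"
  proof
    assume "km \<in> P1 \<union> M1"
    then have "ereal (f km) \<le> emax (P1 \<union> M1) f" by (rule emax_upper)
    moreover have "ereal (f k0) \<le> ereal (f km)" using R2 km b2 by simp
    ultimately show False using nle k0 by (metis order_trans)
  qed
  then have "km \<in> M" using hm km by blast
  then have lm: "emax M2 f \<le> emax M f" using km emax_upper by metis
  have uP: "emax P f \<le> ereal (f k0)" using k0 emax_mono[of P "P \<union> M" f] by auto
  have uM: "emax M f \<le> ereal (f k0)" using k0 emax_mono[of M "P \<union> M" f] by auto
  have "emax M f = emax P f" using lp lm uP uM R2 b2 by auto }
  then show ?thesis by blast
qed

lemma dot_comb: "dotp s0 (\<lambda>i. c1 * t1 i + c2 * t2 i) z = c1 * dotp s0 t1 z + c2 * dotp s0 t2 z"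
  by (simp add: dotp_def sum.distrib sum_distrib_left algebra_simps)

lemma supp_sub:
  assumes "\<forall>i<s0. t1 i \<ge> 0" "\<forall>i<s0. t2 i \<ge> 0" "(c1::real) > 0" "c2 > 0"
  shows "supp s0 t1 \<subseteq> supp s0 (\<lambda>i. c1 * t1 i + c2 * t2 i)"
  using assms unfolding supp_def
  by (auto intro: add_pos_nonneg mult_pos_pos mult_nonneg_nonneg)

lemma ts_mono:
  assumes "ereal g \<le> A1 - R1" "A1 \<le> A" "R \<le> R1"
  shows "ereal g \<le> A - R"
  using assms(1) ereal_minus_mono[OF assms(2) assms(3)] by (rule order_trans)



theorem lemma3p8:
  fixes s0 r0 :: nat and nu nu' :: "nat \<Rightarrow> nat \<Rightarrow> nat"
    and alpha beta \<theta>1 \<theta>2 :: "nat \<Rightarrow> real" and \<gamma> c1 c2 :: real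
  assumes "s0 \<ge> 1" and "r0 \<ge> 1"
    and "\<forall>i<s0. alpha i \<ge> 0"
    and "\<forall>i<s0. \<theta>1 i \<ge> 0" and "\<forall>i<s0. \<theta>2 i \<ge> 0"
    and "GammaP s0 r0 nu nu' \<theta>1 \<inter> GammaM s0 r0 nu nu' \<theta>2 = {}
         \<or> GammaM s0 r0 nu nu' \<theta>1 \<inter> GammaP s0 r0 nu nu' \<theta>2 = {}"
    and "c1 > 0" and "c2 > 0"
  shows "(cond32 s0 r0 nu nu' alpha beta \<theta>1 \<gamma> \<and> cond32 s0 r0 nu nu' alpha beta \<theta>2 \<gamma>
            \<longrightarrow> cond32 s0 r0 nu nu' alpha beta (\<lambda>i. c1 * \<theta>1 i + c2 * \<theta>2 i) \<gamma>)
       \<and> (balance s0 r0 nu nu' alpha beta \<theta>1 \<and> balance s0 r0 nu nu' alpha beta \<theta>2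
            \<longrightarrow> balance s0 r0 nu nu' alpha beta (\<lambda>i. c1 * \<theta>1 i + c2 * \<theta>2 i))"
proof -
  define th where "th = (\<lambda>i. c1 * \<theta>1 i + c2 * \<theta>2 i)"
  define x where "x k = c1 * dotp s0 \<theta>1 (zeta nu nu' k)" for k
  define y where "y k = c2 * dotp s0 \<theta>2 (zeta nu nu' k)" for k
  define f where "f = rho s0 nu alpha beta"
  define P1 where "P1 = GammaP s0 r0 nu nu' \<theta>1"
  define M1 where "M1 = GammaM s0 r0 nu nu' \<theta>1"
  define P2 where "P2 = GammaP s0 r0 nu nu' \<theta>2"
  define M2 where "M2 = GammaM s0 r0 nu nu' \<theta>2"
  define P where "P = GammaP s0 r0 nu nu' th"
  define M where "M = GammaM s0 r0 nu nu' th"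
  have c1: "c1 > 0" and c2: "c2 > 0" using assms by auto
  have mP1: "k \<in> P1 \<longleftrightarrow> k < r0 \<and> x k > 0" for k
    unfolding P1_def GammaP_def x_def using c1 by (simp add: zero_less_mult_iff)
  have mM1: "k \<in> M1 \<longleftrightarrow> k < r0 \<and> x k < 0" for k
    unfolding M1_def GammaM_def x_def using c1 by (simp add: mult_less_0_iff)
  have mP2: "k \<in> P2 \<longleftrightarrow> k < r0 \<and> y k > 0" for k
    unfolding P2_def GammaP_def y_def using c2 by (simp add: zero_less_mult_iff)
  have mM2: "k \<in> M2 \<longleftrightarrow> k < r0 \<and> y k < 0" for k
    unfolding M2_def GammaM_def y_def using c2 by (simp add: mult_less_0_iff)
  have mP: "k \<in> P \<longleftrightarrow> k < r0 \<and> x k + y k > 0" for k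
    unfolding P_def GammaP_def x_def y_def th_def by (simp add: dot_comb)
  have mM: "k \<in> M \<longleftrightarrow> k < r0 \<and> x k + y k < 0" for k
    unfolding M_def GammaM_def x_def y_def th_def by (simp add: dot_comb)
  have finr: "finite {k. k < r0 \<and> Q k}" for Q by simp
  have fins: "finite P1" "finite M1" "finite P2" "finite M2" "finite P" "finite M"
    unfolding P1_def M1_def P2_def M2_def P_def M_def GammaP_def GammaM_def by simp_all
  have disj: "(\<forall>k. \<not> (k \<in> P1 \<and> k \<in> M2)) \<or> (\<forall>k. \<not> (k \<in> M1 \<and> k \<in> P2))"
    using assms(6) unfolding P1_def M1_def P2_def M2_def by blast
  have bal: "emax M1 f = emax P1 f \<Longrightarrow> emax M2 f = emax P2 f \<Longrightarrow> emax M f = emax P f"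
  proof -
    assume b1: "emax M1 f = emax P1 f" and b2: "emax M2 f = emax P2 f"
    from disj show ?thesis
    proof
      assume d: "\<forall>k. \<not> (k \<in> P1 \<and> k \<in> M2)"
      show ?thesis
        apply (rule bal_abstract[of P1 P2 M1 M2 P M f])
        using d by (auto simp: subset_iff fins b1 b2 mP1 mM1 mP2 mM2 mP mM)
    next
      assume d: "\<forall>k. \<not> (k \<in> M1 \<and> k \<in> P2)"
      show ?thesis
        apply (rule bal_abstract[of P2 P1 M2 M1 P M f])
        using d by (auto simp: subset_iff fins b1 b2 mP1 mM1 mP2 mM2 mP mM)
    qed
  qed
  have ts1: "emax (P \<union> M) f \<le> emax (P1 \<union> M1) f \<or> emax M f = emax P f"
    if b2: "emax M2 f = emax P2 f"
    apply (rule ts_abstract[of P M P2 M2 P1 M1])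
    by (auto simp: fins b2 mP1 mM1 mP2 mM2 mP mM)
  have ts2: "emax (P \<union> M) f \<le> emax (P2 \<union> M2) f \<or> emax M f = emax P f"
    if b1: "emax M1 f = emax P1 f"
    apply (rule ts_abstract[of P M P1 M1 P2 M2])
    by (auto simp: fins b1 mP1 mM1 mP2 mM2 mP mM)
  have Rmax: "emax (P \<union> M) f \<le> max (emax (P1 \<union> M1) f) (emax (P2 \<union> M2) f)"
  proof -
    have "P \<union> M \<subseteq> (P1 \<union> M1) \<union> (P2 \<union> M2)" using mP1 mM1 mP2 mM2 mP mM by force
    then show ?thesis using emax_mono emax_Un by metis
  qed
  have S1: "supp s0 \<theta>1 \<subseteq> supp s0 th"
    unfolding th_def using supp_sub assms by blast
  have S2: "supp s0 \<theta>2 \<subseteq> supp s0 th"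
  proof -
    have "th = (\<lambda>i. c2 * \<theta>2 i + c1 * \<theta>1 i)" unfolding th_def by (simp add: add.commute)
    then show ?thesis using supp_sub[of s0 \<theta>2 \<theta>1 c2 c1] assms by simp
  qed
  have A1: "emax (supp s0 \<theta>1) alpha \<le> emax (supp s0 th) alpha" using S1 by (rule emax_mono)
  have A2: "emax (supp s0 \<theta>2) alpha \<le> emax (supp s0 th) alpha" using S2 by (rule emax_mono)
  have BAL: "\<And>t. balance s0 r0 nu nu' alpha beta t \<longleftrightarrow>
       emax (GammaM s0 r0 nu nu' t) f = emax (GammaP s0 r0 nu nu' t) f"
    unfolding balance_def f_def by simp
  have TS: "\<And>t. timescale s0 r0 nu nu' alpha beta t \<gamma> \<longleftrightarrow>
       ereal \<gamma> \<le> emax (supp s0 t) alpha - emax (GammaP s0 r0 nu nu' t \<union> GammaM s0 r0 nu nu' t) f"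
    unfolding timescale_def f_def by simp
  have partii: "balance s0 r0 nu nu' alpha beta \<theta>1 \<and> balance s0 r0 nu nu' alpha beta \<theta>2
            \<longrightarrow> balance s0 r0 nu nu' alpha beta th"
    using bal unfolding BAL P1_def M1_def P2_def M2_def P_def M_def by blast
  have parti: "cond32 s0 r0 nu nu' alpha beta \<theta>1 \<gamma> \<and> cond32 s0 r0 nu nu' alpha beta \<theta>2 \<gamma>
            \<longrightarrow> cond32 s0 r0 nu nu' alpha beta th \<gamma>"
  proof
    assume h: "cond32 s0 r0 nu nu' alpha beta \<theta>1 \<gamma> \<and> cond32 s0 r0 nu nu' alpha beta \<theta>2 \<gamma>"
    let ?B1 = "emax M1 f = emax P1 f" and ?B2 = "emax M2 f = emax P2 f"
    let ?T1 = "ereal \<gamma> \<le> emax (supp s0 \<theta>1) alpha - emax (P1 \<union> M1) f"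
    let ?T2 = "ereal \<gamma> \<le> emax (supp s0 \<theta>2) alpha - emax (P2 \<union> M2) f"
    have h1: "?B1 \<or> ?T1" and h2: "?B2 \<or> ?T2"
      using h unfolding cond32_def BAL TS P1_def M1_def P2_def M2_def by auto
    have goal: "emax M f = emax P f \<or> ereal \<gamma> \<le> emax (supp s0 th) alpha - emax (P \<union> M) f"
    proof (cases ?B1)
      case B1: True
      show ?thesis
      proof (cases ?B2)
        case True then show ?thesis using bal B1 by blast
      next
        case False
        then have T2: ?T2 using h2 by blast
        from ts2[OF B1] show ?thesis
          using ts_mono[OF T2 A2] by blast
      qed
    next
      case False
      then have T1: ?T1 using h1 by blast
      show ?thesis
      proof (cases ?B2)
        case True
        from ts1[OF True] show ?thesis using ts_mono[OF T1 A1] by blast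
      next
        case False
        then have T2: ?T2 using h2 by blast
        have "emax (P \<union> M) f \<le> emax (P1 \<union> M1) f \<or> emax (P \<union> M) f \<le> emax (P2 \<union> M2) f"
          using Rmax by (metis max.absorb_iff1 max_def)
        then show ?thesis using ts_mono[OF T1 A1] ts_mono[OF T2 A2] by blast
      qed
    qed
    then show "cond32 s0 r0 nu nu' alpha beta th \<gamma>"
      unfolding cond32_def BAL TS P_def M_def by blast
  qed
  show ?thesis using parti partii unfolding th_def by blast
qed

end
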